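(* Let $n$ be even and let $A$ be an $n\times n$ row substochastic matrix with row sums $r_1,\dots,r_n$. Then there is a listing $x_1,\dots,x_n$ of the row sums (i.e. $x_k=r_{\tau(k)}$ for some permutation $\tau$ of $\{1,\dots,n\}$) such that $$\operatorname{per}(I-A)\le (1+x_1x_2)(1+x_3x_4)\cdots(1+x_{n-1}x_n).$$
   Context: An $n\times n$ matrix is row substochastic if all its entries are nonnegative and each row sum is at most $1$. The permanent is $\operatorname{per}(M)=\sum_{\pi\in S_n}\prod_i m_{i\pi(i)}$, and $I$ is the identity matrix. *)

theory Defs
  imports Complex_Main "HOL-Combinatorics.Permutations"
begin

text \<open>n x n real matrices are represented as functions nat => nat => real,
  with indices ranging over {0..<n}.\<close>

definition per :: "nat \<Rightarrow> (nat \<Rightarrow> nat \<Rightarrow> real) \<Rightarrow> real" where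
  "per n M = (\<Sum>\<pi> | \<pi> permutes {0..<n}. \<Prod>i<n. M i (\<pi> i))"

definition row_substochastic :: "nat \<Rightarrow> (nat \<Rightarrow> nat \<Rightarrow> real) \<Rightarrow> bool" where
  "row_substochastic n A \<longleftrightarrow>
     (\<forall>i<n. \<forall>j<n. 0 \<le> A i j) \<and> (\<forall>i<n. (\<Sum>j<n. A i j) \<le> 1)"

definition row_sum :: "nat \<Rightarrow> (nat \<Rightarrow> nat \<Rightarrow> real) \<Rightarrow> nat \<Rightarrow> real" where
  "row_sum n A i = (\<Sum>j<n. A i j)"

definition id_minus :: "(nat \<Rightarrow> nat \<Rightarrow> real) \<Rightarrow> nat \<Rightarrow> nat \<Rightarrow> real" where
  "id_minus A i j = (if i = j then 1 else 0) - A i j"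

end

theory Submission
  imports Defs "HOL-Library.FuncSet"
begin

definition perS :: "nat set \<Rightarrow> (nat \<Rightarrow> nat \<Rightarrow> real) \<Rightarrow> real" where
  "perS S M = (\<Sum>\<pi> | \<pi> permutes S. \<Prod>i\<in>S. M i (\<pi> i))"
lemma perS_cong:
  assumes "\<And>l c. l \<in> S \<Longrightarrow> c \<in> S \<Longrightarrow> M l c = M' l c"
  shows "perS S M = perS S M'"
  unfolding perS_def
  by (intro sum.cong refl prod.cong) (auto simp: assms permutes_in_image)
lemma perS_empty: "perS {} M = 1"
  unfolding perS_def by simp
lemma fix_perms:
  assumes "i \<in> S"
  shows "{\<pi>. \<pi> permutes S \<and> \<pi> i = i} = {\<pi>. \<pi> permutes (S - {i})}"
proof (intro set_eqI iffI)
  fix \<pi> assume "\<pi> \<in> {\<pi>. \<pi> permutes S \<and> \<pi> i = i}"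
  then have a: "\<pi> permutes S" "\<pi> i = i" by auto
  have "\<pi> permutes S - {i}"
    by (rule permutes_superset[OF a(1)]) (use a(2) in blast)
  then show "\<pi> \<in> {\<pi>. \<pi> permutes (S - {i})}" by simp
next
  fix \<pi> assume "\<pi> \<in> {\<pi>. \<pi> permutes (S - {i})}"
  then have a: "\<pi> permutes S - {i}" by simp
  have "\<pi> permutes S" by (rule permutes_subset[OF a]) blast
  moreover have "\<pi> i = i" using a by (simp add: permutes_not_in)
  ultimately show "\<pi> \<in> {\<pi>. \<pi> permutes S \<and> \<pi> i = i}" by simp
qed
lemma perS_fix:
  assumes fin: "finite S" and iS: "i \<in> S"
    and zero: "\<And>\<pi>. \<pi> permutes S \<Longrightarrow> \<pi> i \<noteq> i \<Longrightarrow> (\<Prod>l\<in>S. M l (\<pi> l)) = 0"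
  shows "perS S M = M i i * perS (S - {i}) M"
proof -
  have "perS S M = (\<Sum>\<pi> | \<pi> permutes S. if \<pi> i = i then (\<Prod>l\<in>S. M l (\<pi> l)) else 0)"
    unfolding perS_def by (intro sum.cong refl) (auto simp: zero)
  also have "\<dots> = (\<Sum>\<pi> \<in> {\<pi>. \<pi> permutes S \<and> \<pi> i = i}. \<Prod>l\<in>S. M l (\<pi> l))"
    using sum.inter_filter[of "{\<pi>. \<pi> permutes S}" "\<lambda>\<pi>. \<Prod>l\<in>S. M l (\<pi> l)" "\<lambda>\<pi>. \<pi> i = i"]
      finite_permutations[OF fin] by simp
  also have "\<dots> = (\<Sum>\<pi> \<in> {\<pi>. \<pi> permutes (S - {i})}. M i i * (\<Prod>l\<in>S - {i}. M l (\<pi> l)))"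
    unfolding fix_perms[OF iS]
    by (intro sum.cong refl) (simp add: prod.remove[OF fin iS] permutes_not_in)
  finally show ?thesis unfolding perS_def by (simp add: sum_distrib_left)
qed

lemma perS_row_fix:
  assumes fin: "finite S" and iS: "i \<in> S"
    and row: "\<And>c. c \<in> S \<Longrightarrow> c \<noteq> i \<Longrightarrow> M i c = 0"
  shows "perS S M = M i i * perS (S - {i}) M"
proof (rule perS_fix[OF fin iS])
  fix \<pi> assume p: "\<pi> permutes S" "\<pi> i \<noteq> i"
  have "\<pi> i \<in> S" using permutes_in_image[OF p(1)] iS by simp
  then have "M i (\<pi> i) = 0" using row p(2) by simp
  then show "(\<Prod>l\<in>S. M l (\<pi> l)) = 0" by (simp add: prod.remove[OF fin iS])
qed

lemma perS_col_fix:
  assumes fin: "finite S" and iS: "i \<in> S"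
    and col: "\<And>l. l \<in> S \<Longrightarrow> l \<noteq> i \<Longrightarrow> M l i = 0"
  shows "perS S M = M i i * perS (S - {i}) M"
proof (rule perS_fix[OF fin iS])
  fix \<pi> assume p: "\<pi> permutes S" "\<pi> i \<noteq> i"
  have "i \<in> \<pi> ` S" using permutes_image[OF p(1)] iS by simp
  then obtain l where l: "l \<in> S" "\<pi> l = i" by blast
  then have "l \<noteq> i" using p by auto
  then have "M l (\<pi> l) = 0" using col l by simp
  then show "(\<Prod>l\<in>S. M l (\<pi> l)) = 0" by (simp add: prod.remove[OF fin l(1)])
qed

lemma perS_row_linear:
  assumes fin: "finite S" and jS: "j \<in> S"
    and rowj: "\<And>c. c \<in> S \<Longrightarrow> M j c = M1 j c + M2 j c"
    and rows: "\<And>l c. l \<in> S \<Longrightarrow> l \<noteq> j \<Longrightarrow> c \<in> S \<Longrightarrow> M1 l c = M l c \<and> M2 l c = M l c"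
  shows "perS S M = perS S M1 + perS S M2"
proof -
  have "(\<Prod>l\<in>S. M l (\<pi> l)) = (\<Prod>l\<in>S. M1 l (\<pi> l)) + (\<Prod>l\<in>S. M2 l (\<pi> l))"
    if p: "\<pi> permutes S" for \<pi>
  proof -
    have inS: "\<pi> l \<in> S" if "l \<in> S" for l using permutes_in_image[OF p] that by simp
    have e1: "(\<Prod>l\<in>S - {j}. M1 l (\<pi> l)) = (\<Prod>l\<in>S - {j}. M l (\<pi> l))"
      by (rule prod.cong[OF refl]) (simp add: rows inS)
    have e2: "(\<Prod>l\<in>S - {j}. M2 l (\<pi> l)) = (\<Prod>l\<in>S - {j}. M l (\<pi> l))"
      by (rule prod.cong[OF refl]) (simp add: rows inS)
    have "M j (\<pi> j) = M1 j (\<pi> j) + M2 j (\<pi> j)" using rowj inS jS by simp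
    then show ?thesis
      by (simp only: prod.remove[OF fin jS] e1 e2 distrib_right)
  qed
  then show ?thesis unfolding perS_def by (simp add: sum.distrib)
qed



lemma perS_contract:
  assumes fin: "finite S" and iS: "i \<in> S" and jS: "j \<in> S" and ij: "i \<noteq> j"
    and col: "\<And>l. l \<in> S \<Longrightarrow> l \<noteq> j \<Longrightarrow> M l i = 0"
  shows "perS S M = perS (S - {i}) (M(j := (\<lambda>c. M j i * M i c)))"
proof -
  let ?M' = "M(j := (\<lambda>c. M j i * M i c))"
  have zero: "(\<Prod>l\<in>S. M l (\<pi> l)) = 0" if p: "\<pi> permutes S" "\<pi> j \<noteq> i" for \<pi>
  proof -
    obtain l where l: "l \<in> S" "\<pi> l = i" using permutes_image[OF p(1)] iS by force
    then have "l \<noteq> j" using p by auto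
    then have "M l (\<pi> l) = 0" using col l by auto
    then show ?thesis using fin l by (simp add: prod.remove)
  qed
  have "perS S M = (\<Sum>\<pi> | \<pi> permutes S. if \<pi> j = i then (\<Prod>l\<in>S. M l (\<pi> l)) else 0)"
    unfolding perS_def by (intro sum.cong refl) (auto simp: zero)
  also have "\<dots> = (\<Sum>\<pi> \<in> {\<pi>. \<pi> permutes S \<and> \<pi> j = i}. \<Prod>l\<in>S. M l (\<pi> l))"
    using sum.inter_filter[of "{\<pi>. \<pi> permutes S}" "\<lambda>\<pi>. \<Prod>l\<in>S. M l (\<pi> l)" "\<lambda>\<pi>. \<pi> j = i"]
      finite_permutations[OF fin] by simp
  also have "\<dots> = (\<Sum>\<pi> \<in> {\<pi>. \<pi> permutes (S - {i})}. \<Prod>l\<in>S - {i}. ?M' l (\<pi> l))"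
  proof (rule sum.reindex_bij_witness[where i = "\<lambda>\<pi>. \<pi> \<circ> transpose i j" and j = "\<lambda>\<pi>. \<pi> \<circ> transpose i j"])
    fix \<pi> assume "\<pi> \<in> {\<pi>. \<pi> permutes S \<and> \<pi> j = i}"
    then show "\<pi> \<circ> transpose i j \<circ> transpose i j = \<pi>" by (simp add: fun_eq_iff)
  next
    fix \<pi> assume "\<pi> \<in> {\<pi>. \<pi> permutes (S - {i})}"
    then show "\<pi> \<circ> transpose i j \<circ> transpose i j = \<pi>" by (simp add: fun_eq_iff)
  next
    fix \<pi> assume a: "\<pi> \<in> {\<pi>. \<pi> permutes S \<and> \<pi> j = i}"
    then have "\<pi> \<circ> transpose i j permutes S"
      by (intro permutes_compose permutes_swap_id iS jS) auto
    moreover have "(\<pi> \<circ> transpose i j) i = i" using a by simp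
    ultimately show "\<pi> \<circ> transpose i j \<in> {\<pi>. \<pi> permutes (S - {i})}"
      using fix_perms[OF iS] by blast
  next
    fix \<pi> assume a: "\<pi> \<in> {\<pi>. \<pi> permutes (S - {i})}"
    then have "\<pi> permutes S" by (auto intro: permutes_subset)
    then have "\<pi> \<circ> transpose i j permutes S"
      by (intro permutes_compose permutes_swap_id iS jS) auto
    moreover have "(\<pi> \<circ> transpose i j) j = i" using a by (simp add: permutes_not_in)
    ultimately show "\<pi> \<circ> transpose i j \<in> {\<pi>. \<pi> permutes S \<and> \<pi> j = i}" by blast
  next
    fix \<pi> assume a: "\<pi> \<in> {\<pi>. \<pi> permutes S \<and> \<pi> j = i}"
    have jS': "j \<in> S - {i}" using jS ij by auto
    have fin': "finite (S - {i})" using fin by auto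
    have r1: "(\<Prod>l\<in>S - {i}. ?M' l ((\<pi> \<circ> transpose i j) l))
        = ?M' j ((\<pi> \<circ> transpose i j) j) * (\<Prod>l\<in>S - {i} - {j}. ?M' l ((\<pi> \<circ> transpose i j) l))"
      by (rule prod.remove[OF fin' jS'])
    also have "\<dots> = M j i * M i (\<pi> i) * (\<Prod>l\<in>S - {i} - {j}. M l (\<pi> l))"
      by (intro arg_cong2[where f=times] prod.cong) (auto simp: transpose_apply_other)
    also have "\<dots> = M i (\<pi> i) * (M j (\<pi> j) * (\<Prod>l\<in>S - {i} - {j}. M l (\<pi> l)))"
      using a by simp
    also have "\<dots> = (\<Prod>l\<in>S. M l (\<pi> l))"
      by (simp only: prod.remove[OF fin iS] prod.remove[OF fin' jS'])
    finally show "(\<Prod>l\<in>S - {i}. ?M' l ((\<pi> \<circ> transpose i j) l)) = (\<Prod>l\<in>S. M l (\<pi> l))" .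
  qed
  finally show ?thesis unfolding perS_def by simp
qed



definition Mg :: "(nat \<Rightarrow> nat) \<Rightarrow> (nat \<Rightarrow> real) \<Rightarrow> nat \<Rightarrow> nat \<Rightarrow> real" where
  "Mg g r = (\<lambda>l c. (if l = c then 1 else 0) - r l * (if g l = c then 1 else 0))"

definition hf :: "(nat \<Rightarrow> nat) \<Rightarrow> (nat \<Rightarrow> real) \<Rightarrow> nat \<Rightarrow> real" where
  "hf \<sigma> r i = (if \<sigma> i = i then 1 + max 0 (- r i) else sqrt (1 + \<bar>r i * r (\<sigma> i)\<bar>))"

definition inv_on :: "(nat \<Rightarrow> nat) \<Rightarrow> nat set \<Rightarrow> bool" where
  "inv_on \<sigma> S = (\<forall>l\<in>S. \<sigma> l \<in> S \<and> \<sigma> (\<sigma> l) = l)"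

lemma hf_nonneg: "0 \<le> hf \<sigma> r i"
  unfolding hf_def by auto

lemma contract_eq:
  assumes fin: "finite S" and iS: "i \<in> S" and jS: "j \<in> S" and ij: "i \<noteq> j"
    and gi: "g i = k" and ki: "k \<noteq> i" and gj: "g j = i"
    and uniq: "\<And>l. l \<in> S \<Longrightarrow> g l = i \<Longrightarrow> l = j"
  shows "perS S (Mg g r) = perS (S - {i}) (Mg (g(j := k)) (r(j := - (r i * r j))))"
proof -
  define M where "M = Mg g r"
  define M1 where "M1 = M(i := (\<lambda>c. if i = c then 1 else 0))"
  define M2 where "M2 = M(i := (\<lambda>c. - r i * (if k = c then 1 else 0)))"
  define M2' where "M2' = M2(j := (\<lambda>c. M2 j i * M2 i c))"
  define M' where "M' = Mg (g(j := k)) (r(j := - (r i * r j)))"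
  have fin': "finite (S - {i})" using fin by simp
  have jS': "j \<in> S - {i}" using jS ij by simp
  have "perS S M = perS S M1 + perS S M2"
    by (rule perS_row_linear[OF fin iS]) (auto simp: M_def M1_def M2_def Mg_def gi)
  moreover have "perS S M1 = perS (S - {i}) M"
  proof -
    have "perS S M1 = M1 i i * perS (S - {i}) M1"
      by (rule perS_row_fix[OF fin iS]) (auto simp: M1_def)
    also have "perS (S - {i}) M1 = perS (S - {i}) M"
      by (rule perS_cong) (auto simp: M1_def)
    moreover have "M1 i i = 1" by (simp add: M1_def)
    ultimately show ?thesis by simp
  qed
  moreover have "perS S M2 = perS (S - {i}) M2'"
    unfolding M2'_def
  proof (rule perS_contract[OF fin iS jS ij])
    fix l assume l: "l \<in> S" "l \<noteq> j"
    show "M2 l i = 0"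
    proof (cases "l = i")
      case True then show ?thesis using ki by (simp add: M2_def)
    next
      case False
      then have "g l \<noteq> i" using uniq l by blast
      then show ?thesis using False by (simp add: M2_def M_def Mg_def)
    qed
  qed
  moreover have "perS (S - {i}) M' = perS (S - {i}) M + perS (S - {i}) M2'"
    by (rule perS_row_linear[OF fin' jS'])
       (use ij gj in \<open>auto simp: M'_def M_def M2'_def M2_def Mg_def\<close>)
  ultimately show ?thesis by (simp add: M_def M'_def)
qed


lemma inv_on_ext:
  assumes iS: "i \<in> S" and inv: "inv_on \<sigma>' (S - {i})"
  shows "inv_on (\<sigma>'(i := i)) S"
  unfolding inv_on_def
proof
  fix l assume l: "l \<in> S"
  show "(\<sigma>'(i := i)) l \<in> S \<and> (\<sigma>'(i := i)) ((\<sigma>'(i := i)) l) = l"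
  proof (cases "l = i")
    case True then show ?thesis using iS by simp
  next
    case False
    then have "\<sigma>' l \<in> S - {i}" "\<sigma>' (\<sigma>' l) = l" using inv l unfolding inv_on_def by auto
    then show ?thesis using False by auto
  qed
qed

lemma step_simple:
  assumes fin: "finite S" and iS: "i \<in> S" and ri: "\<bar>r i\<bar> \<le> 1"
    and eq: "P = Mg g r i i * P'" and inv: "inv_on \<sigma>' (S - {i})"
    and bd: "P' \<le> (\<Prod>l\<in>S - {i}. hf \<sigma>' r l)"
  shows "\<exists>\<sigma>. inv_on \<sigma> S \<and> P \<le> (\<Prod>l\<in>S. hf \<sigma> r l)"
proof -
  define \<sigma> where "\<sigma> = \<sigma>'(i := i)"
  have inv\<sigma>: "inv_on \<sigma> S" unfolding \<sigma>_def by (rule inv_on_ext[OF iS inv])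
  have pe: "(\<Prod>l\<in>S - {i}. hf \<sigma> r l) = (\<Prod>l\<in>S - {i}. hf \<sigma>' r l)"
    by (rule prod.cong[OF refl]) (auto simp: hf_def \<sigma>_def)
  have prodS: "(\<Prod>l\<in>S. hf \<sigma> r l) = hf \<sigma> r i * (\<Prod>l\<in>S - {i}. hf \<sigma>' r l)"
    using pe by (simp add: prod.remove[OF fin iS])
  have hi: "hf \<sigma> r i = 1 + max 0 (- r i)" by (simp add: hf_def \<sigma>_def)
  have m0: "0 \<le> Mg g r i i" using ri by (auto simp: Mg_def)
  have m1: "Mg g r i i \<le> hf \<sigma> r i" using ri unfolding hi by (auto simp: Mg_def)
  have pn: "0 \<le> (\<Prod>l\<in>S. hf \<sigma> r l)" by (rule prod_nonneg) (simp add: hf_nonneg)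
  have "P \<le> (\<Prod>l\<in>S. hf \<sigma> r l)"
  proof (cases "0 \<le> P'")
    case True
    have "P = Mg g r i i * P'" by (rule eq)
    also have "\<dots> \<le> hf \<sigma> r i * (\<Prod>l\<in>S - {i}. hf \<sigma>' r l)"
      by (rule mult_mono[OF m1 bd]) (use True in \<open>auto simp: hf_nonneg\<close>)
    finally show ?thesis unfolding prodS .
  next
    case False
    then have "P \<le> 0" unfolding eq using m0 by (simp add: mult_nonneg_nonpos)
    then show ?thesis using pn by linarith
  qed
  then show ?thesis using inv\<sigma> by blast
qed


lemma step_contract:
  assumes fin: "finite S" and iS: "i \<in> S" and jS: "j \<in> S" and ij: "i \<noteq> j"
    and ri: "\<bar>r i\<bar> \<le> 1" and inv: "inv_on \<sigma>' (S - {i})"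
    and r'_def: "r' = r(j := - (r i * r j))"
  shows "\<exists>\<sigma>. inv_on \<sigma> S \<and> (\<Prod>l\<in>S - {i}. hf \<sigma>' r' l) \<le> (\<Prod>l\<in>S. hf \<sigma> r l)"
proof (cases "\<sigma>' j = j")
  case True
  define \<sigma> where "\<sigma> = \<sigma>'(i := j, j := i)"
  have other: "\<sigma>' l \<in> S - {i} \<and> \<sigma>' l \<noteq> j \<and> \<sigma>' (\<sigma>' l) = l" if l: "l \<in> S - {i} - {j}" for l
  proof -
    have a: "\<sigma>' l \<in> S - {i}" "\<sigma>' (\<sigma>' l) = l" using inv l unfolding inv_on_def by auto
    have "\<sigma>' l \<noteq> j"
    proof
      assume "\<sigma>' l = j"
      then have "\<sigma>' (\<sigma>' l) = j" using True by simp
      then show False using a l by simp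
    qed
    then show ?thesis using a by simp
  qed
  have inv\<sigma>: "inv_on \<sigma> S"
    unfolding inv_on_def
  proof
    fix l assume l: "l \<in> S"
    show "\<sigma> l \<in> S \<and> \<sigma> (\<sigma> l) = l"
    proof (cases "l = i \<or> l = j")
      case True then show ?thesis using iS jS ij by (auto simp: \<sigma>_def)
    next
      case False
      then have "l \<in> S - {i} - {j}" using l by simp
      from other[OF this] show ?thesis using False by (auto simp: \<sigma>_def)
    qed
  qed
  have fin': "finite (S - {i})" using fin by simp
  have jS': "j \<in> S - {i}" using jS ij by simp
  let ?R = "\<Prod>l\<in>S - {i} - {j}. hf \<sigma> r l"
  have rest: "(\<Prod>l\<in>S - {i} - {j}. hf \<sigma>' r' l) = ?R"
  proof (rule prod.cong[OF refl])
    fix l assume l: "l \<in> S - {i} - {j}"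
    from other[OF l] have "\<sigma>' l \<noteq> j" "\<sigma>' l \<noteq> i" by auto
    moreover have "\<sigma> l = \<sigma>' l" using l by (simp add: \<sigma>_def)
    ultimately show "hf \<sigma>' r' l = hf \<sigma> r l" using l by (simp add: hf_def r'_def)
  qed
  have Rn: "0 \<le> ?R" by (rule prod_nonneg) (simp add: hf_nonneg)
  have lhs: "(\<Prod>l\<in>S - {i}. hf \<sigma>' r' l) = (1 + max 0 (r i * r j)) * ?R"
  proof -
    have "hf \<sigma>' r' j = 1 + max 0 (r i * r j)" using True by (simp add: hf_def r'_def)
    then show ?thesis by (simp only: prod.remove[OF fin' jS'] rest)
  qed
  have "hf \<sigma> r i * hf \<sigma> r j = sqrt (1 + \<bar>r i * r j\<bar>) * sqrt (1 + \<bar>r j * r i\<bar>)"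
    using ij by (simp add: hf_def \<sigma>_def)
  also have "\<dots> = 1 + \<bar>r i * r j\<bar>" by (simp add: mult.commute)
  finally have hij: "hf \<sigma> r i * hf \<sigma> r j = 1 + \<bar>r i * r j\<bar>" .
  have rhs: "(\<Prod>l\<in>S. hf \<sigma> r l) = (1 + \<bar>r i * r j\<bar>) * ?R"
    by (simp add: prod.remove[OF fin iS] prod.remove[OF fin' jS'] hij[symmetric] mult.assoc)
  have "(\<Prod>l\<in>S - {i}. hf \<sigma>' r' l) \<le> (\<Prod>l\<in>S. hf \<sigma> r l)"
    unfolding lhs rhs by (rule mult_right_mono[OF _ Rn]) auto
  then show ?thesis using inv\<sigma> by blast
next
  case False
  define \<sigma> where "\<sigma> = \<sigma>'(i := i)"
  have inv\<sigma>: "inv_on \<sigma> S" unfolding \<sigma>_def by (rule inv_on_ext[OF iS inv])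
  have absr: "\<bar>r' m\<bar> \<le> \<bar>r m\<bar>" for m
  proof (cases "m = j")
    case True
    have "\<bar>r i * r j\<bar> \<le> 1 * \<bar>r j\<bar>" unfolding abs_mult by (rule mult_right_mono[OF ri]) simp
    then show ?thesis using True by (simp add: r'_def)
  qed (simp add: r'_def)
  have pw: "hf \<sigma>' r' l \<le> hf \<sigma> r l" if l: "l \<in> S - {i}" for l
  proof (cases "\<sigma>' l = l")
    case True
    then have "l \<noteq> j" using False by auto
    then show ?thesis using True l by (simp add: hf_def \<sigma>_def r'_def)
  next
    case F2: False
    have "\<bar>r' l * r' (\<sigma>' l)\<bar> \<le> \<bar>r l * r (\<sigma>' l)\<bar>"
      unfolding abs_mult by (rule mult_mono[OF absr absr]) auto
    then show ?thesis using F2 l by (simp add: hf_def \<sigma>_def)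
  qed
  have "(\<Prod>l\<in>S - {i}. hf \<sigma>' r' l) \<le> (\<Prod>l\<in>S - {i}. hf \<sigma> r l)"
    by (rule prod_mono) (simp add: pw hf_nonneg)
  also have "\<dots> \<le> hf \<sigma> r i * (\<Prod>l\<in>S - {i}. hf \<sigma> r l)"
  proof -
    have "1 \<le> hf \<sigma> r i" by (simp add: hf_def \<sigma>_def)
    moreover have "0 \<le> (\<Prod>l\<in>S - {i}. hf \<sigma> r l)" by (rule prod_nonneg) (simp add: hf_nonneg)
    ultimately show ?thesis by (metis mult_le_cancel_right1 mult.commute not_le)
  qed
  also have "\<dots> = (\<Prod>l\<in>S. hf \<sigma> r l)" by (simp add: prod.remove[OF fin iS])
  finally show ?thesis using inv\<sigma> by blast
qed


lemma main_bound:
  "finite S \<Longrightarrow> (\<forall>i\<in>S. \<bar>r i\<bar> \<le> 1) \<Longrightarrow>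
     \<exists>\<sigma>. inv_on \<sigma> S \<and> perS S (Mg g r) \<le> (\<Prod>i\<in>S. hf \<sigma> r i)"
proof (induction "card S" arbitrary: S g r rule: less_induct)
  case less
  note fin = less.prems(1) and rb = less.prems(2)
  show ?case
  proof (cases "S = {}")
    case True
    have "inv_on id S" using True by (simp add: inv_on_def)
    then show ?thesis using True by (auto simp: perS_empty)
  next
    case False
    show ?thesis
    proof (cases "\<exists>i\<in>S. g i = i \<or> g i \<notin> S \<or> (\<forall>j\<in>S. j \<noteq> i \<longrightarrow> g j \<noteq> i)")
      case True
      then obtain i where iS: "i \<in> S" and ci: "g i = i \<or> g i \<notin> S \<or> (\<forall>j\<in>S. j \<noteq> i \<longrightarrow> g j \<noteq> i)"
        by blast
      have eq: "perS S (Mg g r) = Mg g r i i * perS (S - {i}) (Mg g r)"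
      proof (cases "g i = i \<or> g i \<notin> S")
        case True
        show ?thesis
          by (rule perS_row_fix[OF fin iS]) (use True in \<open>auto simp: Mg_def\<close>)
      next
        case False
        then have "\<forall>j\<in>S. j \<noteq> i \<longrightarrow> g j \<noteq> i" using ci by blast
        then show ?thesis
          by (intro perS_col_fix[OF fin iS]) (auto simp: Mg_def)
      qed
      have lt: "card (S - {i}) < card S" using fin iS by (meson card_Diff1_less)
      obtain \<sigma>' where inv: "inv_on \<sigma>' (S - {i})"
        and bd: "perS (S - {i}) (Mg g r) \<le> (\<Prod>l\<in>S - {i}. hf \<sigma>' r l)"
        using less.hyps[OF lt, where g=g and r=r] fin rb by auto
      show ?thesis
        by (rule step_simple[OF fin iS _ eq inv bd]) (use rb iS in auto)
    next
      case False
      then have all: "\<And>i. i \<in> S \<Longrightarrow> g i \<noteq> i \<and> g i \<in> S \<and> (\<exists>j\<in>S. j \<noteq> i \<and> g j = i)"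
        by blast
      have "g ` S = S"
      proof
        show "g ` S \<subseteq> S" using all by blast
        show "S \<subseteq> g ` S" using all by force
      qed
      then have inj: "inj_on g S" by (intro eq_card_imp_inj_on[OF fin]) simp
      obtain i where iS: "i \<in> S" using False \<open>S \<noteq> {}\<close> by blast
      define k where "k = g i"
      have kS: "k \<in> S" and ki: "k \<noteq> i" using all[OF iS] by (auto simp: k_def)
      obtain j where jS: "j \<in> S" and ji: "j \<noteq> i" and gj: "g j = i" using all[OF iS] by blast
      have uniq: "\<And>l. l \<in> S \<Longrightarrow> g l = i \<Longrightarrow> l = j"
        using inj jS gj by (auto dest: inj_onD)
      define r' where "r' = r(j := - (r i * r j))"
      have eq: "perS S (Mg g r) = perS (S - {i}) (Mg (g(j := k)) r')"
        unfolding r'_def by (rule contract_eq[OF fin iS jS ji[symmetric] k_def[symmetric] ki gj uniq])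
      have lt: "card (S - {i}) < card S" using fin iS by (meson card_Diff1_less)
      have rb': "\<forall>l\<in>S - {i}. \<bar>r' l\<bar> \<le> 1"
      proof
        fix l assume l: "l \<in> S - {i}"
        show "\<bar>r' l\<bar> \<le> 1"
        proof (cases "l = j")
          case True
          have "\<bar>r i * r j\<bar> \<le> 1" unfolding abs_mult
            using rb iS jS by (intro mult_le_one) auto
          then show ?thesis using True by (simp add: r'_def)
        next
          case False then show ?thesis using rb l by (simp add: r'_def)
        qed
      qed
      obtain \<sigma>' where inv: "inv_on \<sigma>' (S - {i})"
        and bd: "perS (S - {i}) (Mg (g(j := k)) r') \<le> (\<Prod>l\<in>S - {i}. hf \<sigma>' r' l)"
        using less.hyps[OF lt, where g="g(j := k)" and r=r'] fin rb' by auto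
      obtain \<sigma> where inv\<sigma>: "inv_on \<sigma> S" and le: "(\<Prod>l\<in>S - {i}. hf \<sigma>' r' l) \<le> (\<Prod>l\<in>S. hf \<sigma> r l)"
        using step_contract[OF fin iS jS ji[symmetric] _ inv r'_def] rb iS by auto
      show ?thesis using inv\<sigma> eq bd le by auto
    qed
  qed
qed



lemma pick_pair:
  assumes fin: "finite T" and c2: "card T \<ge> 2" and inv: "inv_on \<sigma> T" and rn: "\<forall>i\<in>T. 0 \<le> r i"
  shows "\<exists>b c. b \<in> T \<and> c \<in> T \<and> b \<noteq> c \<and> hf \<sigma> r b * hf \<sigma> r c \<le> 1 + r b * r c
     \<and> inv_on \<sigma> (T - {b} - {c})"
proof (cases "\<exists>b\<in>T. \<sigma> b \<noteq> b")
  case True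
  then obtain b where bT: "b \<in> T" and sb: "\<sigma> b \<noteq> b" by blast
  define c where "c = \<sigma> b"
  have cT: "c \<in> T" and scb: "\<sigma> c = b" using inv bT unfolding inv_on_def c_def by auto
  have bc: "b \<noteq> c" using sb by (simp add: c_def)
  have "hf \<sigma> r b * hf \<sigma> r c = sqrt (1 + \<bar>r b * r c\<bar>) * sqrt (1 + \<bar>r c * r b\<bar>)"
    using sb bc scb by (simp add: hf_def c_def)
  also have "\<dots> = 1 + r b * r c" using rn bT cT by (simp add: mult.commute)
  finally have h: "hf \<sigma> r b * hf \<sigma> r c \<le> 1 + r b * r c" by simp
  have "inv_on \<sigma> (T - {b} - {c})"
    unfolding inv_on_def
  proof
    fix l assume l: "l \<in> T - {b} - {c}"
    then have a: "\<sigma> l \<in> T" "\<sigma> (\<sigma> l) = l" using inv unfolding inv_on_def by auto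
    have "\<sigma> l \<noteq> b"
    proof
      assume "\<sigma> l = b" then have "l = c" using a(2) c_def by simp
      then show False using l by simp
    qed
    moreover have "\<sigma> l \<noteq> c"
    proof
      assume "\<sigma> l = c" then have "l = b" using a(2) scb by simp
      then show False using l by simp
    qed
    ultimately show "\<sigma> l \<in> T - {b} - {c} \<and> \<sigma> (\<sigma> l) = l" using a by simp
  qed
  then show ?thesis using bT cT bc h by blast
next
  case False
  obtain b c where bc: "b \<in> T" "c \<in> T" "b \<noteq> c"
  proof -
    from c2 obtain b where b: "b \<in> T" by (metis card.empty ex_in_conv not_numeral_le_zero)
    have "card (T - {b}) \<ge> 1" using c2 b fin by simp
    then obtain c where "c \<in> T - {b}" by (metis card.empty ex_in_conv not_one_le_zero)
    then show ?thesis using that b by blast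
  qed
  have h: "hf \<sigma> r b * hf \<sigma> r c \<le> 1 + r b * r c"
    using False bc rn by (simp add: hf_def)
  have "inv_on \<sigma> (T - {b} - {c})" using False by (simp add: inv_on_def)
  then show ?thesis using bc h by blast
qed

lemma pairing:
  "finite T \<Longrightarrow> card T = 2 * m \<Longrightarrow> inv_on \<sigma> T \<Longrightarrow> (\<forall>i\<in>T. 0 \<le> r i) \<Longrightarrow>
   \<exists>\<tau>. inj_on \<tau> {0..<2*m} \<and> \<tau> ` {0..<2*m} = T \<and>
       (\<Prod>i\<in>T. hf \<sigma> r i) \<le> (\<Prod>k<m. 1 + r (\<tau> (2*k)) * r (\<tau> (2*k+1)))"
proof (induction m arbitrary: T \<sigma>)
  case 0
  then have "T = {}" by simp
  then show ?case by simp
next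
  case (Suc m)
  note fin = Suc.prems(1) and cT = Suc.prems(2) and inv = Suc.prems(3) and rn = Suc.prems(4)
  obtain b c where bT: "b \<in> T" and cT': "c \<in> T" and bc: "b \<noteq> c"
    and h: "hf \<sigma> r b * hf \<sigma> r c \<le> 1 + r b * r c" and inv': "inv_on \<sigma> (T - {b} - {c})"
    using pick_pair[OF fin _ inv rn] cT by auto
  define T' where "T' = T - {b} - {c}"
  have fin': "finite T'" using fin by (simp add: T'_def)
  have cT'': "card T' = 2 * m" using cT bT cT' bc fin by (simp add: T'_def)
  obtain \<tau>' where inj': "inj_on \<tau>' {0..<2*m}" and im': "\<tau>' ` {0..<2*m} = T'"
    and bd': "(\<Prod>i\<in>T'. hf \<sigma> r i) \<le> (\<Prod>k<m. 1 + r (\<tau>' (2*k)) * r (\<tau>' (2*k+1)))"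
    using Suc.IH[OF fin' cT'' inv'[folded T'_def]] rn by (auto simp: T'_def)
  define \<tau> where "\<tau> = \<tau>'(2*m := b, 2*m+1 := c)"
  have bT': "b \<notin> T'" and cT2: "c \<notin> T'" by (auto simp: T'_def)
  have eqlow: "\<tau> x = \<tau>' x" if "x < 2*m" for x using that by (simp add: \<tau>_def)
  have set: "{0..<2 * Suc m} = insert (2*m) (insert (2*m+1) {0..<2*m})" by auto
  have im: "\<tau> ` {0..<2 * Suc m} = T"
  proof -
    have "\<tau> ` {0..<2*m} = \<tau>' ` {0..<2*m}" by (rule image_cong) (auto simp: eqlow)
    then have "\<tau> ` {0..<2 * Suc m} = insert (\<tau> (2*m)) (insert (\<tau> (2*m+1)) T')"
      unfolding set im'[symmetric] by (simp only: image_insert)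
    then have "\<tau> ` {0..<2 * Suc m} = insert b (insert c T')" by (simp add: \<tau>_def)
    then show ?thesis using bT cT' by (auto simp: T'_def)
  qed
  have inj0: "inj_on \<tau> {0..<2*m}" using inj' by (rule inj_on_cong[THEN iffD1, rotated]) (auto simp: eqlow)
  have im0: "\<tau> ` {0..<2*m} = T'" using im' by (metis eqlow atLeastLessThan_iff image_cong)
  have t1: "\<tau> (2*m) = b" "\<tau> (2*m+1) = c" by (simp_all add: \<tau>_def)
  have d1: "insert (2*m+1) {0..<2*m} - {2*m} = insert (2*m+1) {0..<2*m}" by auto
  have d2: "{0..<2*m} - {2*m+1} = {0..<2*m}" by auto
  have inj: "inj_on \<tau> {0..<2 * Suc m}"
  proof (rule inj_onI)
    fix x y assume x: "x \<in> {0..<2 * Suc m}" and y: "y \<in> {0..<2 * Suc m}" and e: "\<tau> x = \<tau> y"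
    have cls: "z < 2*m \<and> \<tau> z \<in> T' \<or> z = 2*m \<or> z = 2*m+1" if "z \<in> {0..<2 * Suc m}" for z
      using that im0 by auto
    show "x = y"
    proof (cases "x < 2*m \<and> y < 2*m")
      case True then show ?thesis using inj0 e by (auto dest: inj_onD)
    next
      case False
      then show ?thesis using cls[OF x] cls[OF y] e t1 bT' cT2 bc by auto
    qed
  qed
  have prodT: "(\<Prod>i\<in>T. hf \<sigma> r i) = hf \<sigma> r b * hf \<sigma> r c * (\<Prod>i\<in>T'. hf \<sigma> r i)"
  proof -
    have c1: "c \<in> T - {b}" using cT' bc by simp
    have f1: "finite (T - {b})" using fin by simp
    show ?thesis
      by (simp only: prod.remove[OF fin bT] prod.remove[OF f1 c1] T'_def mult.assoc)
  qed
  have rhs: "(\<Prod>k<Suc m. 1 + r (\<tau> (2*k)) * r (\<tau> (2*k+1)))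
      = (\<Prod>k<m. 1 + r (\<tau>' (2*k)) * r (\<tau>' (2*k+1))) * (1 + r b * r c)"
  proof -
    have "(\<Prod>k<m. 1 + r (\<tau> (2*k)) * r (\<tau> (2*k+1))) = (\<Prod>k<m. 1 + r (\<tau>' (2*k)) * r (\<tau>' (2*k+1)))"
      by (rule prod.cong[OF refl]) (simp add: eqlow)
    then show ?thesis by (simp only: prod.lessThan_Suc t1)
  qed
  have pn: "0 \<le> (\<Prod>i\<in>T'. hf \<sigma> r i)" by (rule prod_nonneg) (simp add: hf_nonneg)
  have nn: "0 \<le> 1 + r b * r c" using rn bT cT' by simp
  have "(\<Prod>i\<in>T. hf \<sigma> r i) \<le> (1 + r b * r c) * (\<Prod>k<m. 1 + r (\<tau>' (2*k)) * r (\<tau>' (2*k+1)))"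
    unfolding prodT by (rule mult_mono[OF h bd' nn pn])
  also have "\<dots> = (\<Prod>k<Suc m. 1 + r (\<tau> (2*k)) * r (\<tau> (2*k+1)))"
    unfolding rhs by (simp only: mult.commute)
  finally show ?case using inj im by blast
qed



theorem mainTheorem9:
  fixes n :: nat and A :: "nat \<Rightarrow> nat \<Rightarrow> real"
  assumes "even n"
    and "row_substochastic n A"
  shows "\<exists>\<tau>. \<tau> permutes {0..<n} \<and>
           per n (id_minus A) \<le>
             (\<Prod>k<n div 2. 1 + row_sum n A (\<tau> (2*k)) * row_sum n A (\<tau> (2*k+1)))"
proof -
  define r where "r = row_sum n A"
  define N where "N = {0..<n}"
  define m where "m = n div 2"
  have finN: "finite N" by (simp add: N_def)
  have nm: "n = 2*m" using assms(1) by (simp add: m_def)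
  have A0: "\<And>i j. i \<in> N \<Longrightarrow> j \<in> N \<Longrightarrow> 0 \<le> A i j"
    using assms(2) by (auto simp: row_substochastic_def N_def)
  have rsum: "r i = (\<Sum>j\<in>N. A i j)" for i
    by (simp add: r_def row_sum_def N_def atLeast0LessThan)
  have r1: "\<And>i. i \<in> N \<Longrightarrow> r i \<le> 1"
    using assms(2) by (auto simp: row_substochastic_def N_def r_def row_sum_def)
  have r0: "\<And>i. i \<in> N \<Longrightarrow> 0 \<le> r i"
    unfolding rsum by (rule sum_nonneg) (simp add: A0)
  define RHS where "RHS \<tau> = (\<Prod>k<m. 1 + r (\<tau> (2*k)) * r (\<tau> (2*k+1)))" for \<tau> :: "nat \<Rightarrow> nat"
  have each: "\<exists>\<tau>. \<tau> permutes N \<and> perS N (Mg g r) \<le> RHS \<tau>" for g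
  proof -
    have rb: "\<forall>i\<in>N. \<bar>r i\<bar> \<le> 1" using r0 r1 by auto
    obtain \<sigma> where inv: "inv_on \<sigma> N" and b1: "perS N (Mg g r) \<le> (\<Prod>i\<in>N. hf \<sigma> r i)"
      using main_bound[OF finN rb] by blast
    have cN: "card N = 2 * m" using nm by (simp add: N_def)
    obtain \<tau>0 where inj0: "inj_on \<tau>0 {0..<2*m}" and im0: "\<tau>0 ` {0..<2*m} = N"
      and b2: "(\<Prod>i\<in>N. hf \<sigma> r i) \<le> (\<Prod>k<m. 1 + r (\<tau>0 (2*k)) * r (\<tau>0 (2*k+1)))"
      using pairing[OF finN cN inv] r0 by blast
    define \<tau> where "\<tau> = (\<lambda>i. if i < n then \<tau>0 i else i)"
    have N2: "N = {0..<2*m}" using nm by (simp add: N_def)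
    have eqN: "\<And>x. x \<in> N \<Longrightarrow> \<tau> x = \<tau>0 x" by (simp add: \<tau>_def N_def)
    have "inj_on \<tau> N" using inj0 unfolding N2[symmetric]
      by (rule inj_on_cong[THEN iffD1, rotated]) (simp add: eqN)
    moreover have "\<tau> ` N = N" using im0 unfolding N2[symmetric]
      by (metis eqN image_cong)
    ultimately have "bij_betw \<tau> N N" by (simp add: bij_betw_def)
    then have perm: "\<tau> permutes N"
      by (rule bij_imp_permutes) (simp add: \<tau>_def N_def)
    have "RHS \<tau> = (\<Prod>k<m. 1 + r (\<tau>0 (2*k)) * r (\<tau>0 (2*k+1)))"
      unfolding RHS_def by (rule prod.cong[OF refl]) (simp add: \<tau>_def nm)
    then show ?thesis using perm b1 b2 by auto
  qed
  define P where "P = {\<tau>. \<tau> permutes N}"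
  have finP: "finite P" unfolding P_def by (rule finite_permutations[OF finN])
  have neP: "id \<in> P" by (simp add: P_def permutes_id)
  define R where "R = Max (RHS ` P)"
  have leR: "perS N (Mg g r) \<le> R" for g
  proof -
    obtain \<tau> where "\<tau> permutes N" "perS N (Mg g r) \<le> RHS \<tau>" using each by blast
    moreover have "RHS \<tau> \<le> R" unfolding R_def
      by (rule Max_ge) (use finP \<open>\<tau> permutes N\<close> in \<open>auto simp: P_def\<close>)
    ultimately show ?thesis by linarith
  qed
  obtain \<tau>s where \<tau>sP: "\<tau>s permutes N" and \<tau>sR: "RHS \<tau>s = R"
  proof -
    have "R \<in> RHS ` P" unfolding R_def by (rule Max_in) (use finP neP in auto)
    then show ?thesis using that by (auto simp: P_def)
  qed
  define c where "c i k = (if r i = 0 then (if k = 0 then 1 else 0) else A i k / r i)" for i k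
  define E where "E i k j = (if i = j then 1 else 0) - r i * (if k = j then (1::real) else 0)" for i k j :: nat
  have c0: "0 \<le> c i k" if "i \<in> N" "k \<in> N" for i k
    using that A0 r0 by (auto simp: c_def)
  have csum: "(\<Sum>k\<in>N. c i k) = 1" if iN: "i \<in> N" for i
  proof (cases "r i = 0")
    case True
    have "0 \<in> N" using iN by (auto simp: N_def)
    then show ?thesis using True finN by (simp add: c_def)
  next
    case False
    then have "(\<Sum>k\<in>N. c i k) = (\<Sum>k\<in>N. A i k) / r i" by (simp add: c_def sum_divide_distrib)
    then show ?thesis using False by (simp add: rsum[symmetric])
  qed
  have rc: "r i * c i j = A i j" if iN: "i \<in> N" and jN: "j \<in> N" for i j
  proof (cases "r i = 0")
    case True
    then have "(\<Sum>j\<in>N. A i j) = 0" by (simp add: rsum)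
    then have "A i j = 0" using sum_nonneg_eq_0_iff[OF finN] A0 iN jN by blast
    then show ?thesis using True by (simp add: c_def)
  next
    case False then show ?thesis by (simp add: c_def)
  qed
  have rowid: "id_minus A i j = (\<Sum>k\<in>N. c i k * E i k j)" if iN: "i \<in> N" and jN: "j \<in> N" for i j
  proof -
    have "(\<Sum>k\<in>N. c i k * E i k j) = (\<Sum>k\<in>N. (if i = j then 1 else 0) * c i k - r i * (if k = j then c i k else 0))"
      by (rule sum.cong[OF refl]) (simp add: E_def algebra_simps)
    also have "\<dots> = (if i = j then 1 else 0) * (\<Sum>k\<in>N. c i k) - r i * (\<Sum>k\<in>N. if k = j then c i k else 0)"
      by (simp add: sum_subtractf sum_distrib_left)
    also have "\<dots> = (if i = j then 1 else 0) - A i j"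
      using csum[OF iN] rc[OF iN jN] jN finN by simp
    finally show ?thesis by (simp add: id_minus_def)
  qed
  define w where "w g = (\<Prod>i\<in>N. c i (g i))" for g :: "nat \<Rightarrow> nat"
  let ?G = "PiE N (\<lambda>_. N)"
  have prodexp: "(\<Prod>i\<in>N. id_minus A i (\<pi> i)) = (\<Sum>g\<in>?G. w g * (\<Prod>i\<in>N. Mg g r i (\<pi> i)))"
    if p: "\<pi> permutes N" for \<pi>
  proof -
    have "(\<Prod>i\<in>N. id_minus A i (\<pi> i)) = (\<Prod>i\<in>N. \<Sum>k\<in>N. c i k * E i k (\<pi> i))"
      by (rule prod.cong[OF refl]) (simp add: rowid permutes_in_image[OF p])
    also have "\<dots> = (\<Sum>g\<in>?G. \<Prod>i\<in>N. c i (g i) * E i (g i) (\<pi> i))"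
      by (rule prod_sum_PiE[OF finN]) (simp add: finN)
    also have "\<dots> = (\<Sum>g\<in>?G. w g * (\<Prod>i\<in>N. Mg g r i (\<pi> i)))"
      by (rule sum.cong[OF refl]) (simp add: w_def prod.distrib E_def Mg_def)
    finally show ?thesis .
  qed
  have "per n (id_minus A) = (\<Sum>\<pi>\<in>P. \<Prod>i\<in>N. id_minus A i (\<pi> i))"
    by (simp add: per_def P_def N_def atLeast0LessThan)
  also have "\<dots> = (\<Sum>\<pi>\<in>P. \<Sum>g\<in>?G. w g * (\<Prod>i\<in>N. Mg g r i (\<pi> i)))"
    by (rule sum.cong[OF refl]) (simp add: P_def prodexp)
  also have "\<dots> = (\<Sum>g\<in>?G. \<Sum>\<pi>\<in>P. w g * (\<Prod>i\<in>N. Mg g r i (\<pi> i)))"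
    by (rule sum.swap)
  also have "\<dots> = (\<Sum>g\<in>?G. w g * perS N (Mg g r))"
    by (simp add: perS_def P_def sum_distrib_left)
  also have "\<dots> \<le> (\<Sum>g\<in>?G. w g * R)"
  proof (rule sum_mono)
    fix g assume g: "g \<in> ?G"
    have "0 \<le> w g" unfolding w_def by (rule prod_nonneg) (use g c0 in auto)
    then show "w g * perS N (Mg g r) \<le> w g * R" by (rule mult_left_mono[OF leR])
  qed
  also have "\<dots> = R * (\<Sum>g\<in>?G. w g)" by (simp add: sum_distrib_left mult.commute)
  also have "(\<Sum>g\<in>?G. w g) = (\<Prod>i\<in>N. \<Sum>k\<in>N. c i k)"
    unfolding w_def by (rule prod_sum_PiE[OF finN, symmetric]) (simp add: finN)
  also have "\<dots> = 1" by (simp add: csum)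
  finally have "per n (id_minus A) \<le> RHS \<tau>s" using \<tau>sR by simp
  then show ?thesis using \<tau>sP by (auto simp: RHS_def r_def N_def m_def)
qed


end
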